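(* Let $A$ be Hurwitz and let $M_{\rm initial},\sigma_{\rm slowest}>0$ satisfy $\|e^{At}\|_2\le M_{\rm initial}e^{-\sigma_{\rm slowest}t}$ for all $t\ge0$. Let $\mathcal{B}_{\rm ultimate}=\{x\in\mathbb{R}^n:\|x\|_2\le 2M_{\rm initial}\|B\|_2/\sigma_{\rm slowest}\}$. If a trajectory $x(\cdot)$ of the relay feedback system $\dot x=Ax-B\,\mathrm{sign}(Cx)$ has $x(0)\in\mathcal{B}_{\rm ultimate}$, then $$\max_{t\ge0}\|x(t)\|_2\le \widehat M_{\rm excursion}:=\frac{M_{\rm initial}(2M_{\rm initial}+1)}{\sigma_{\rm slowest}}\|B\|_2 .$$
   Context: $A$ is the $n\times n$ observer canonical matrix ($A_{i+1,i}=1$ for $i=1,\dots,n-1$, last column $(-a_0,\dots,-a_{n-1})^T$, other entries zero), $B=(b_0,\dots,b_{n-1})^T$, $C=(0,\dots,0,1)$. $\mathrm{sign}(e)=1$ for $e>0$, $-1$ for $e<0$, and $[-1,1]$ for $e=0$. *)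

theory Defs
  imports "HOL-Analysis.Analysis"
begin

primrec matpow :: "real^'n^'n \<Rightarrow> nat \<Rightarrow> real^'n^'n::finite" where
  "matpow M 0 = mat 1"
| "matpow M (Suc k) = M ** matpow M k"

definition mat_exp :: "real^'n^'n \<Rightarrow> real^'n^'n::finite" where
  "mat_exp M = (\<Sum>k. (1 / fact k) *\<^sub>R matpow M k)"

definition norm2 :: "real^'n^'m \<Rightarrow> real" where
  "norm2 M = onorm (\<lambda>x::real^'n::finite. M *v x)"

definition hurwitz :: "real^'n^'n::finite \<Rightarrow> bool" where
  "hurwitz M \<longleftrightarrow> (\<forall>(l::complex) (v::complex^'n). v \<noteq> 0 \<and> map_matrix complex_of_real M *v v = l *s v
       \<longrightarrow> Re l < 0)"

definition sign_set :: "real \<Rightarrow> real set" where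
  "sign_set e = (if e > 0 then {1} else if e < 0 then {-1} else {-1..1})"

text \<open>The index type 'n is enumerated by a bijection
  idx : 'n -> {0..<n} (idx i = k means i is the (k+1)-th coordinate).\<close>
definition obs_A :: "('n::finite \<Rightarrow> nat) \<Rightarrow> (nat \<Rightarrow> real) \<Rightarrow> real^'n^'n" where
  "obs_A idx a = (\<chi> i j. (if idx i = idx j + 1 then 1 else 0)
                       + (if idx j = CARD('n) - 1 then - a (idx i) else 0))"

definition obs_B :: "('n::finite \<Rightarrow> nat) \<Rightarrow> (nat \<Rightarrow> real) \<Rightarrow> real^'n" where
  "obs_B idx b = (\<chi> i. b (idx i))"

definition obs_C :: "('n::finite \<Rightarrow> nat) \<Rightarrow> real^'n" where
  "obs_C idx = (\<chi> i. if idx i = CARD('n) - 1 then 1 else 0)"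

text \<open>Trajectory (Caratheodory solution on [0,oo)) of x' \<in> A x - B sign(C x):
  there is a selection u(t) \<in> sign(C x(t)) such that
  x(t) = x(0) + \<integral>_0^t (A x(s) - B u(s)) ds for all t \<ge> 0.\<close>
definition relay_trajectory :: "real^'n^'n \<Rightarrow> real^'n \<Rightarrow> real^'n \<Rightarrow> (real \<Rightarrow> real^'n::finite) \<Rightarrow> bool" where
  "relay_trajectory A B C x \<longleftrightarrow>
     (\<exists>u::real \<Rightarrow> real. (\<forall>t\<ge>0. u t \<in> sign_set (C \<bullet> x t)) \<and>
        (\<forall>t\<ge>0. ((\<lambda>s. A *v x s - u s *\<^sub>R B) has_integral (x t - x 0)) {0..t}))"

end

theory Submission
  imports Defs
begin

lemma matpow_scale: "matpow (r *\<^sub>R A) k = (r ^ k) *\<^sub>R matpow A k"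
  by (induction k) (simp_all add: matrix_scalar_ac scalar_matrix_assoc[symmetric])

lemma matpow_comm: "A ** matpow A k = matpow A k ** A"
proof (induction k)
  case (Suc k)
  have "A ** matpow A (Suc k) = A ** (matpow A k ** A)" using Suc by simp
  also have "\<dots> = matpow A (Suc k) ** A" by (simp add: matrix_mul_assoc)
  finally show ?case .
qed simp

definition Kb :: "real^'n^'n::finite \<Rightarrow> real" where
  "Kb A = (\<Sum>i\<in>UNIV. \<Sum>j\<in>UNIV. \<bar>A$i$j\<bar>) + 1"

lemma Kb_ge: "1 \<le> Kb A"
  unfolding Kb_def by (simp add: sum_nonneg)

lemma row_le_Kb: "(\<Sum>l\<in>UNIV. \<bar>A$i$l\<bar>) \<le> Kb A"
proof -
  have "(\<Sum>l\<in>UNIV. \<bar>A$i$l\<bar>) \<le> (\<Sum>i\<in>UNIV. \<Sum>j\<in>UNIV. \<bar>A$i$j\<bar>)"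
    by (rule member_le_sum[of i UNIV "\<lambda>i. \<Sum>j\<in>UNIV. \<bar>A$i$j\<bar>"]) (auto simp: sum_nonneg)
  then show ?thesis unfolding Kb_def by simp
qed

lemma matpow_entry_bound: "\<bar>matpow A k $ i $ j\<bar> \<le> Kb A ^ k"
proof (induction k arbitrary: i j)
  case 0
  then show ?case by (simp add: mat_def)
next
  case (Suc k)
  have "\<bar>matpow A (Suc k) $ i $ j\<bar> = \<bar>\<Sum>l\<in>UNIV. A$i$l * matpow A k $ l $ j\<bar>"
    by (simp add: matrix_matrix_mult_def)
  also have "\<dots> \<le> (\<Sum>l\<in>UNIV. \<bar>A$i$l\<bar> * Kb A ^ k)"
    by (rule order_trans[OF sum_abs]) (auto intro!: sum_mono mult_left_mono Suc simp: abs_mult)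
  also have "\<dots> = (\<Sum>l\<in>UNIV. \<bar>A$i$l\<bar>) * Kb A ^ k" by (simp add: sum_distrib_right)
  also have "\<dots> \<le> Kb A * Kb A ^ k"
    using Kb_ge[of A] by (intro mult_right_mono row_le_Kb) auto
  finally show ?case by simp
qed

lemma summable_expK: "summable (\<lambda>k. (c::real) ^ k / fact k)"
  using summable_exp_generic[of c] by (simp add: divide_inverse mult.commute)

lemma norm_mat_le: "norm (X::real^'n::finite^'n) \<le> (\<Sum>i\<in>UNIV. \<Sum>j\<in>UNIV. \<bar>X$i$j\<bar>)"
proof -
  have "norm X \<le> (\<Sum>i\<in>UNIV. norm (X$i))"
    unfolding norm_vec_def by (rule L2_set_le_sum) auto
  also have "\<dots> \<le> (\<Sum>i\<in>UNIV. \<Sum>j\<in>UNIV. \<bar>X$i$j\<bar>)"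
    by (intro sum_mono norm_le_l1_cart)
  finally show ?thesis .
qed

lemma summable_matexp: "summable (\<lambda>k. (1 / fact k) *\<^sub>R matpow (r *\<^sub>R A) k)"
proof (rule summable_comparison_test'[where N=0])
  let ?c = "real (CARD('a)) * real (CARD('a))"
  show "summable (\<lambda>k. ?c * ((\<bar>r\<bar> * Kb A) ^ k / fact k))"
    by (intro summable_mult summable_expK)
  fix k :: nat
  have "norm ((1 / fact k) *\<^sub>R matpow (r *\<^sub>R A) k) \<le>
      (\<Sum>i\<in>(UNIV::'a set). \<Sum>j\<in>(UNIV::'a set). (\<bar>r\<bar> * Kb A) ^ k / fact k)"
  proof (rule order_trans[OF norm_mat_le], intro sum_mono)
    fix i j :: 'a
    have "\<bar>((1 / fact k) *\<^sub>R matpow (r *\<^sub>R A) k) $ i $ j\<bar> = \<bar>r\<bar>^k * \<bar>matpow A k $ i $ j\<bar> / fact k"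
      by (simp add: matpow_scale abs_mult power_abs)
    also have "\<dots> \<le> \<bar>r\<bar>^k * Kb A ^ k / fact k"
      by (intro divide_right_mono mult_left_mono matpow_entry_bound) auto
    finally show "\<bar>((1 / fact k) *\<^sub>R matpow (r *\<^sub>R A) k) $ i $ j\<bar> \<le> (\<bar>r\<bar> * Kb A) ^ k / fact k"
      by (simp add: power_mult_distrib)
  qed
  then show "norm ((1 / fact k) *\<^sub>R matpow (r *\<^sub>R A) k) \<le> ?c * ((\<bar>r\<bar> * Kb A) ^ k / fact k)"
    by simp
qed

definition cf :: "real^'n^'n::finite \<Rightarrow> 'n \<Rightarrow> 'n \<Rightarrow> nat \<Rightarrow> real" where
  "cf A i j k = matpow A k $ i $ j / fact k"

lemma bl_entry: "bounded_linear (\<lambda>X::real^'n::finite^'n. X $ i $ j)"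
  using bounded_linear_compose[OF bounded_linear_vec_nth bounded_linear_vec_nth] by blast

lemma mat_exp_entry: "mat_exp (r *\<^sub>R A) $ i $ j = (\<Sum>k. cf A i j k * r ^ k)"
proof -
  have "mat_exp (r *\<^sub>R A) $ i $ j = (\<Sum>k. ((1 / fact k) *\<^sub>R matpow (r *\<^sub>R A) k) $ i $ j)"
    unfolding mat_exp_def by (rule bounded_linear.suminf[OF bl_entry summable_matexp])
  also have "\<dots> = (\<Sum>k. cf A i j k * r ^ k)"
    by (simp add: matpow_scale cf_def ac_simps)
  finally show ?thesis .
qed

lemma summable_cf: "summable (\<lambda>k. cf A i j k * y ^ k)"
proof (rule summable_comparison_test'[where N=0])
  show "summable (\<lambda>k. (\<bar>y\<bar> * Kb A) ^ k / fact k)" by (rule summable_expK)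
  fix k :: nat
  have "norm (cf A i j k * y ^ k) = \<bar>matpow A k $ i $ j\<bar> * \<bar>y\<bar>^k / fact k"
    by (simp add: cf_def abs_mult power_abs)
  also have "\<dots> \<le> Kb A ^ k * \<bar>y\<bar>^k / fact k"
    by (intro divide_right_mono mult_right_mono matpow_entry_bound) auto
  finally show "norm (cf A i j k * y ^ k) \<le> (\<bar>y\<bar> * Kb A) ^ k / fact k"
    by (simp add: power_mult_distrib mult.commute)
qed

lemma mat_exp_entry_deriv:
  "((\<lambda>r. mat_exp (r *\<^sub>R A) $ i $ j) has_real_derivative (mat_exp (r *\<^sub>R A) ** A) $ i $ j) (at r)"
proof -
  have d: "((\<lambda>r. \<Sum>k. cf A i j k * r ^ k) has_real_derivative (\<Sum>k. diffs (cf A i j) k * r ^ k)) (at r)"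
    by (rule termdiffs_strong_converges_everywhere[OF summable_cf])
  have "(\<Sum>k. diffs (cf A i j) k * r ^ k) = (\<Sum>k. \<Sum>l\<in>UNIV. cf A i l k * r ^ k * A $ l $ j)"
  proof (rule suminf_cong)
    fix k
    have "diffs (cf A i j) k * r ^ k = matpow A (Suc k) $ i $ j / fact k * r ^ k"
      by (simp add: diffs_def cf_def del: of_nat_Suc)
    also have "matpow A (Suc k) = matpow A k ** A" by (simp add: matpow_comm)
    finally show "diffs (cf A i j) k * r ^ k = (\<Sum>l\<in>UNIV. cf A i l k * r ^ k * A $ l $ j)"
      by (simp add: matrix_matrix_mult_def cf_def[abs_def] sum_distrib_left sum_divide_distrib sum_distrib_right field_simps)
  qed
  also have "\<dots> = (\<Sum>l\<in>UNIV. \<Sum>k. cf A i l k * r ^ k * A $ l $ j)"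
    by (rule suminf_sum) (intro summable_mult2 summable_cf)
  also have "\<dots> = (\<Sum>l\<in>UNIV. (\<Sum>k. cf A i l k * r ^ k) * A $ l $ j)"
    by (intro sum.cong refl suminf_mult2[symmetric] summable_cf)
  also have "\<dots> = (mat_exp (r *\<^sub>R A) ** A) $ i $ j"
    by (simp add: matrix_matrix_mult_def mat_exp_entry)
  finally show ?thesis using d by (simp add: mat_exp_entry)
qed

lemma mat_exp_zero: "mat_exp (0 *\<^sub>R A) = mat 1"
proof -
  have "\<And>i j. mat_exp (0 *\<^sub>R A) $ i $ j = mat 1 $ i $ j"
  proof -
    fix i j
    have "(\<lambda>k. cf A i j k * 0 ^ k) sums (cf A i j 0)"
      using powser_sums_zero[of "cf A i j"] by simp
    then show "mat_exp (0 *\<^sub>R A) $ i $ j = mat 1 $ i $ j"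
      unfolding mat_exp_entry by (simp add: sums_iff cf_def)
  qed
  then show ?thesis by (simp add: vec_eq_iff)
qed

lemma vec_deriv_comp:
  fixes f :: "real \<Rightarrow> real^'n::finite"
  assumes "\<And>i. ((\<lambda>s. f s $ i) has_real_derivative (f' $ i)) (at x within S)"
  shows "(f has_vector_derivative f') (at x within S)"
  unfolding has_vector_derivative_def
proof (subst has_derivative_componentwise_within, intro ballI)
  fix b :: "real^'n" assume "b \<in> Basis"
  then obtain k where b: "b = axis k 1" by (auto simp: Basis_vec_def)
  have "((\<lambda>s. f s $ k) has_derivative (\<lambda>h. h * f' $ k)) (at x within S)"
    using assms[of k] unfolding has_field_derivative_def by (simp add: mult_commute_abs)
  then show "((\<lambda>x. f x \<bullet> b) has_derivative (\<lambda>x. x *\<^sub>R f' \<bullet> b)) (at x within S)"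
    by (simp add: b inner_axis)
qed

lemma E_entry_deriv:
  "((\<lambda>s. mat_exp ((t - s) *\<^sub>R A) $ i $ j) has_real_derivative
      - ((mat_exp ((t - s) *\<^sub>R A) ** A) $ i $ j)) (at s within S)"
proof -
  have "((\<lambda>s. mat_exp (s *\<^sub>R A) $ i $ j) \<circ> (\<lambda>s. t - s) has_real_derivative
      (mat_exp ((t - s) *\<^sub>R A) ** A) $ i $ j * (-1)) (at s)"
    by (rule DERIV_chain[OF mat_exp_entry_deriv]) (auto intro!: derivative_eq_intros)
  then show ?thesis by (auto simp: o_def intro: has_field_derivative_at_within)
qed

lemma q_deriv:
  fixes z :: "real \<Rightarrow> real^'n::finite"
  assumes "(z has_vector_derivative z') (at s within S)"
  shows "((\<lambda>s. mat_exp ((t - s) *\<^sub>R A) *v z s) has_vector_derivative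
     (mat_exp ((t - s) *\<^sub>R A) *v z' - (mat_exp ((t - s) *\<^sub>R A) ** A) *v z s)) (at s within S)"
proof (rule vec_deriv_comp)
  fix i
  have zc: "((\<lambda>s. z s $ j) has_real_derivative z' $ j) (at s within S)" for j
    using bounded_linear.has_vector_derivative[OF bounded_linear_vec_nth assms, of j]
    by (simp add: has_real_derivative_iff_has_vector_derivative)
  have "((\<lambda>s. \<Sum>j\<in>UNIV. mat_exp ((t - s) *\<^sub>R A) $ i $ j * z s $ j) has_real_derivative
      (\<Sum>j\<in>UNIV. mat_exp ((t - s) *\<^sub>R A) $ i $ j * z' $ j + (- ((mat_exp ((t - s) *\<^sub>R A) ** A) $ i $ j)) * z s $ j))
      (at s within S)"
    by (intro DERIV_sum DERIV_mult' E_entry_deriv zc)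
  then show "((\<lambda>s. (mat_exp ((t - s) *\<^sub>R A) *v z s) $ i) has_real_derivative
     (mat_exp ((t - s) *\<^sub>R A) *v z' - (mat_exp ((t - s) *\<^sub>R A) ** A) *v z s) $ i) (at s within S)"
    by (simp add: matrix_vector_mult_def sum.distrib sum_subtractf algebra_simps)
qed

lemma VC:
  fixes y :: "real \<Rightarrow> real^'n::finite"
  assumes "0 \<le> t"
    and "\<And>s. s \<in> {0..t} \<Longrightarrow> (y has_vector_derivative (A *v y s + g s)) (at s within {0..t})"
  shows "((\<lambda>s. mat_exp ((t - s) *\<^sub>R A) *v g s) has_integral (y t - mat_exp (t *\<^sub>R A) *v y 0)) {0..t}"
proof -
  have "((\<lambda>s. mat_exp ((t - s) *\<^sub>R A) *v g s) has_integral
      ((\<lambda>s. mat_exp ((t - s) *\<^sub>R A) *v y s) t - (\<lambda>s. mat_exp ((t - s) *\<^sub>R A) *v y s) 0)) {0..t}"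
  proof (rule fundamental_theorem_of_calculus[OF assms(1)])
    fix s assume "s \<in> {0..t}"
    from q_deriv[OF assms(2)[OF this], where A=A and t=t]
    show "((\<lambda>s. mat_exp ((t - s) *\<^sub>R A) *v y s) has_vector_derivative mat_exp ((t - s) *\<^sub>R A) *v g s)
        (at s within {0..t})"
      by (simp add: matrix_vector_right_distrib matrix_vector_mul_assoc)
  qed
  then show ?thesis using mat_exp_zero[of A] by simp
qed

lemma E_cont:
  fixes z :: "real \<Rightarrow> real^'n::finite"
  assumes "continuous_on S z"
  shows "continuous_on S (\<lambda>s. mat_exp ((t - s) *\<^sub>R A) *v z s)"
proof -
  have ce: "continuous_on S (\<lambda>s. mat_exp ((t - s) *\<^sub>R A) $ i $ j)" for i j
    by (intro continuous_at_imp_continuous_on ballI DERIV_isCont[OF E_entry_deriv[where S=UNIV]])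
  show ?thesis unfolding matrix_vector_mult_def
    by (intro continuous_intros ce assms)
qed

lemma E_norm:
  assumes "\<forall>t\<ge>0. norm2 (mat_exp (t *\<^sub>R A)) \<le> M * exp (- \<sigma> * t)" "0 \<le> r"
  shows "norm (mat_exp (r *\<^sub>R A) *v v) \<le> M * exp (- \<sigma> * r) * norm v"
proof -
  have "norm (mat_exp (r *\<^sub>R A) *v v) \<le> norm2 (mat_exp (r *\<^sub>R A)) * norm v"
    unfolding norm2_def by (rule onorm) simp
  also have "\<dots> \<le> M * exp (- \<sigma> * r) * norm v"
    using assms by (intro mult_right_mono) auto
  finally show ?thesis .
qed


lemma eps_le:
  fixes a b c :: real
  assumes "\<And>h. 0 < h \<Longrightarrow> a \<le> b + h * c"
  shows "a \<le> b"
proof (rule ccontr)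
  assume "\<not> a \<le> b"
  then have d: "0 < a - b" by simp
  define h where "h = (a - b) / (2 * (\<bar>c\<bar> + 1))"
  have hp: "0 < h" using d by (simp add: h_def)
  have "h * c \<le> h * (\<bar>c\<bar> + 1)" using hp by (intro mult_left_mono) auto
  also have "\<dots> = (a - b) / 2" unfolding h_def by (simp add: field_simps)
  finally have "h * c < a - b" using d by simp
  with assms[OF hp] show False by simp
qed

lemma exp_int:
  fixes \<sigma> t :: real
  assumes "0 < \<sigma>" "0 \<le> t"
  shows "((\<lambda>s. exp (- \<sigma> * (t - s))) has_integral (1 / \<sigma> - exp (- \<sigma> * t) / \<sigma>)) {0..t}"
proof -
  have "((\<lambda>s. exp (- \<sigma> * (t - s))) has_integral
     ((\<lambda>s. exp (- \<sigma> * (t - s)) / \<sigma>) t - (\<lambda>s. exp (- \<sigma> * (t - s)) / \<sigma>) 0)) {0..t}"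
  proof (rule fundamental_theorem_of_calculus[OF assms(2)])
    fix s assume "s \<in> {0..t}"
    show "((\<lambda>s. exp (- \<sigma> * (t - s)) / \<sigma>) has_vector_derivative exp (- \<sigma> * (t - s))) (at s within {0..t})"
      unfolding has_real_derivative_iff_has_vector_derivative[symmetric]
      using assms(1) by (auto intro!: derivative_eq_intros)
  qed
  then show ?thesis by simp
qed

lemma Av_cont[continuous_intros]:
  fixes A :: "real^'n::finite^'m::finite"
  shows "continuous_on S z \<Longrightarrow> continuous_on S (\<lambda>s. A *v z s)"
  by (rule bounded_linear.continuous_on[OF matrix_vector_mul_bounded_linear])

lemma steklov_bound:
  fixes A :: "real^'n::finite^'n" and W :: "real \<Rightarrow> real^'n"
  assumes hE: "\<forall>t\<ge>0. norm2 (mat_exp (t *\<^sub>R A)) \<le> M * exp (- \<sigma> * t)"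
    and M: "0 < M" and sig: "0 < \<sigma>"
    and Wc: "\<And>T. continuous_on {0..T} W"
    and W0: "W 0 = 0"
    and WL: "\<And>s r. 0 \<le> s \<Longrightarrow> s \<le> r \<Longrightarrow> norm (W r - W s) \<le> L * (r - s)"
    and t: "0 \<le> t"
  shows "norm (W t + integral {0..t} (\<lambda>s. mat_exp ((t - s) *\<^sub>R A) *v (A *v W s))) \<le> M * L / \<sigma>"
proof -
  let ?E = "\<lambda>r. mat_exp (r *\<^sub>R A)"
  let ?J = "integral {0..t} (\<lambda>s. ?E (t - s) *v (A *v W s))"
  define nA where "nA = onorm (\<lambda>v. A *v v)"
  have nA: "norm (A *v v) \<le> nA * norm v" for v
    unfolding nA_def by (rule onorm) simp
  have L0: "0 \<le> L" using WL[of 0 1] by (simp add: order_trans[OF norm_ge_zero])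
  have En: "norm (?E r *v v) \<le> M * exp (- \<sigma> * r) * norm v" if "0 \<le> r" for r v
    by (rule E_norm[OF hE that])
  have En1: "norm (?E r *v v) \<le> M * norm v" if "0 \<le> r" for r v
  proof -
    have "exp (- \<sigma> * r) \<le> 1" using sig that by simp
    then have "M * exp (- \<sigma> * r) * norm v \<le> M * 1 * norm v"
      using M by (intro mult_right_mono mult_left_mono) auto
    then show ?thesis using En[OF that, of v] by simp
  qed
  show ?thesis
  proof (rule eps_le[where c = "L + M * L + t * M * nA * L"])
    fix h :: real assume h: "0 < h"
    define I where "I = (\<lambda>s. integral {0..s} W)"
    define Wh where "Wh = (\<lambda>s. (I (s + h) - I s) /\<^sub>R h)"
    define Dh where "Dh = (\<lambda>s. (W (s + h) - W s) /\<^sub>R h)"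
    have Wint: "W integrable_on {a..b}" if "0 \<le> a" for a b
      using integrable_continuous_real[OF continuous_on_subset[OF Wc[of b], of "{a..b}"]] that by auto
    have Id: "(I has_vector_derivative W s) (at s within {0..T})" if "s \<in> {0..T}" for s T
      unfolding I_def by (rule integral_has_vector_derivative[OF Wc that])
    have Whd: "(Wh has_vector_derivative Dh s) (at s within {0..t})" if s: "s \<in> {0..t}" for s
    proof -
      have "((\<lambda>s. s + h) has_vector_derivative 1) (at s within {0..t})"
        by (auto intro!: derivative_eq_intros simp: has_real_derivative_iff_has_vector_derivative[symmetric])
      moreover have "(I has_vector_derivative W (s + h)) (at ((\<lambda>s. s + h) s) within (\<lambda>s. s + h) ` {0..t})"
        by (rule has_vector_derivative_within_subset[OF Id[of "s + h" "t + h"]]) (use s h in auto)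
      ultimately have d1: "((\<lambda>s. I (s + h)) has_vector_derivative W (s + h)) (at s within {0..t})"
        using vector_diff_chain_within[of "\<lambda>s. s + h" 1 s "{0..t}" I "W (s + h)"] by (simp add: o_def)
      have d2: "(I has_vector_derivative W s) (at s within {0..t})"
        by (rule has_vector_derivative_within_subset[OF Id[of s "t + h"]]) (use s h in auto)
      show ?thesis unfolding Wh_def Dh_def
        using bounded_linear.has_vector_derivative[OF bounded_linear_scaleR_right[of "inverse h"] has_vector_derivative_diff[OF d1 d2]]
        by (simp add: scaleR_diff_right)
    qed
    have Ic: "continuous_on {0..T} I" for T
      unfolding I_def by (rule indefinite_integral_continuous_1[OF Wint]) simp
    have Wshc: "continuous_on {0..t} (\<lambda>s. W (s + h))"
      by (rule continuous_on_compose2[OF Wc[of "t + h"]]) (use h in \<open>auto intro!: continuous_intros\<close>)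
    have Ishc: "continuous_on {0..t} (\<lambda>s. I (s + h))"
      by (rule continuous_on_compose2[OF Ic[of "t + h"]]) (use h in \<open>auto intro!: continuous_intros\<close>)
    have Whc: "continuous_on {0..t} Wh"
      unfolding Wh_def by (intro continuous_intros Ishc continuous_on_subset[OF Ic[of t]]) auto
    have Dhc: "continuous_on {0..t} Dh"
      unfolding Dh_def by (intro continuous_intros Wshc continuous_on_subset[OF Wc[of t]]) auto
    have Wc': "continuous_on {0..t} W" by (rule Wc)
    have Whapp: "norm (Wh s - W s) \<le> L * h" if s: "0 \<le> s" for s
    proof -
      have "I (s + h) - I s = integral {s..s+h} W"
        unfolding I_def using Henstock_Kurzweil_Integration.integral_combine[of 0 s "s + h" W] Wint[of 0 "s + h"] s h
        by (simp add: algebra_simps)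
      moreover have "integral {s..s+h} (\<lambda>r. W r - W s) = integral {s..s+h} W - h *\<^sub>R W s"
        using Wint[of s "s + h"] s h integral_diff[of W "{s..s+h}" "\<lambda>r. W s"]
          integrable_const_ivl[of "W s" s "s + h"]
        by (simp add: integral_const_real)
      ultimately have "Wh s = (h *\<^sub>R W s + integral {s..s+h} (\<lambda>r. W r - W s)) /\<^sub>R h"
        unfolding Wh_def by (simp add: algebra_simps)
      then have eq: "Wh s - W s = integral {s..s+h} (\<lambda>r. W r - W s) /\<^sub>R h"
        using h by (simp add: scaleR_add_right)
      have "norm (integral {s..s+h} (\<lambda>r. W r - W s)) \<le> (L * h) * (s + h - s)"
      proof (rule integral_bound)
        show "s \<le> s + h" using h by simp
        show "continuous_on {s..s + h} (\<lambda>r. W r - W s)"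
          by (intro continuous_intros continuous_on_subset[OF Wc[of "s + h"]]) (use s in auto)
        fix r assume "r \<in> {s..s+h}"
        then have "norm (W r - W s) \<le> L * (r - s)" using WL[of s r] s by auto
        also have "\<dots> \<le> L * h" using \<open>r \<in> {s..s+h}\<close> L0 by (intro mult_left_mono) auto
        finally show "norm (W r - W s) \<le> L * h" .
      qed
      then show ?thesis using h unfolding eq by (simp add: field_simps)
    qed
    have Dhb: "norm (Dh s) \<le> L" if "0 \<le> s" for s
    proof -
      have "norm (Dh s) = norm (W (s + h) - W s) / h" unfolding Dh_def using h by (simp add: divide_inverse mult.commute)
      also have "\<dots> \<le> (L * h) / h" using WL[of s "s + h"] that h by (intro divide_right_mono) auto
      finally show ?thesis using h by simp
    qed
    have vc: "((\<lambda>s. ?E (t - s) *v (Dh s - A *v Wh s)) has_integral (Wh t - ?E t *v Wh 0)) {0..t}"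
      by (rule VC[OF t]) (use Whd in simp)
    have int1: "(\<lambda>s. ?E (t - s) *v Dh s) integrable_on {0..t}"
      by (intro integrable_continuous_real E_cont Dhc)
    have int2: "(\<lambda>s. ?E (t - s) *v (A *v Wh s)) integrable_on {0..t}"
      by (intro integrable_continuous_real E_cont continuous_intros Whc)
    have int3: "(\<lambda>s. ?E (t - s) *v (A *v W s)) integrable_on {0..t}"
      by (intro integrable_continuous_real E_cont continuous_intros Wc')
    let ?K1 = "integral {0..t} (\<lambda>s. ?E (t - s) *v Dh s)"
    let ?K2 = "integral {0..t} (\<lambda>s. ?E (t - s) *v (A *v Wh s))"
    have "?K1 - ?K2 = integral {0..t} (\<lambda>s. ?E (t - s) *v (Dh s - A *v Wh s))"
      using integral_diff[OF int1 int2] by (simp add: matrix_vector_mult_diff_distrib)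
    also have "\<dots> = Wh t - ?E t *v Wh 0" using vc by (rule integral_unique)
    finally have key: "Wh t + ?K2 = ?E t *v Wh 0 + ?K1" by (simp add: algebra_simps)
    have bK1: "norm ?K1 \<le> M * L / \<sigma>"
    proof -
      have "norm ?K1 \<le> integral {0..t} (\<lambda>s. M * L * exp (- \<sigma> * (t - s)))"
      proof (rule integral_norm_bound_integral[OF int1])
        show "(\<lambda>s. M * L * exp (- \<sigma> * (t - s))) integrable_on {0..t}"
          by (intro integrable_continuous_real continuous_intros)
        fix s assume s: "s \<in> {0..t}"
        have "norm (?E (t - s) *v Dh s) \<le> M * exp (- \<sigma> * (t - s)) * norm (Dh s)"
          using s by (intro En) auto
        also have "\<dots> \<le> M * exp (- \<sigma> * (t - s)) * L"
          using s M by (intro mult_left_mono Dhb) auto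
        finally show "norm (?E (t - s) *v Dh s) \<le> M * L * exp (- \<sigma> * (t - s))" by (simp add: ac_simps)
      qed
      also have "\<dots> = M * L * (1 / \<sigma> - exp (- \<sigma> * t) / \<sigma>)"
        using integral_unique[OF exp_int[OF sig t]] by simp
      also have "\<dots> \<le> M * L * (1 / \<sigma>)"
        using M L0 sig by (intro mult_left_mono) auto
      finally show ?thesis by simp
    qed
    have bE0: "norm (?E t *v Wh 0) \<le> M * (L * h)"
    proof -
      have "norm (?E t *v Wh 0) \<le> M * norm (Wh 0)" by (rule En1[OF t])
      also have "\<dots> \<le> M * (L * h)" using Whapp[of 0] W0 M by (intro mult_left_mono) auto
      finally show ?thesis .
    qed
    have bJ: "norm (?J - ?K2) \<le> (M * nA * (L * h)) * (t - 0)"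
    proof -
      have "?J - ?K2 = integral {0..t} (\<lambda>s. ?E (t - s) *v (A *v (W s - Wh s)))"
        using integral_diff[OF int3 int2]
        by (simp add: matrix_vector_mult_diff_distrib)
      also have "norm \<dots> \<le> (M * nA * (L * h)) * (t - 0)"
      proof (rule integral_bound)
        show "continuous_on {0..t} (\<lambda>s. ?E (t - s) *v (A *v (W s - Wh s)))"
          by (intro E_cont continuous_intros Wc' Whc)
        fix s assume s: "s \<in> {0..t}"
        have "norm (?E (t - s) *v (A *v (W s - Wh s))) \<le> M * norm (A *v (W s - Wh s))"
          using s by (intro En1) auto
        also have "\<dots> \<le> M * (nA * norm (W s - Wh s))" using M nA by (intro mult_left_mono) auto
        also have "\<dots> \<le> M * (nA * (L * h))"
          using M Whapp[of s] s onorm_pos_le[of "\<lambda>v. A *v v"] unfolding nA_def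
          by (intro mult_left_mono) (auto simp: norm_minus_commute)
        finally show "norm (?E (t - s) *v (A *v (W s - Wh s))) \<le> M * nA * (L * h)" by (simp add: ac_simps)
      qed (use t in auto)
      finally show ?thesis .
    qed
    have eqT: "W t + ?J = (W t - Wh t) + (?E t *v Wh 0 + ?K1) + (?J - ?K2)"
      using key by (simp add: algebra_simps)
    have n1: "norm ((W t - Wh t) + (?E t *v Wh 0 + ?K1) + (?J - ?K2))
        \<le> norm ((W t - Wh t) + (?E t *v Wh 0 + ?K1)) + norm (?J - ?K2)"
      by (rule norm_triangle_ineq)
    have n2: "norm ((W t - Wh t) + (?E t *v Wh 0 + ?K1)) \<le> norm (W t - Wh t) + norm (?E t *v Wh 0 + ?K1)"
      by (rule norm_triangle_ineq)
    have n3: "norm (?E t *v Wh 0 + ?K1) \<le> norm (?E t *v Wh 0) + norm ?K1"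
      by (rule norm_triangle_ineq)
    have n4: "norm (W t - Wh t) \<le> L * h"
      using Whapp[OF t] by (simp add: norm_minus_commute)
    have "norm (W t + ?J) \<le> L * h + M * (L * h) + M * L / \<sigma> + (M * nA * (L * h)) * (t - 0)"
      unfolding eqT using n1 n2 n3 n4 bE0 bK1 bJ by linarith
    then show "norm (W t + ?J) \<le> M * L / \<sigma> + h * (L + M * L + t * M * nA * L)"
      by (simp add: algebra_simps)
  qed
qed


lemma traj_bound:
  fixes A :: "real^'n::finite^'n" and B :: "real^'n" and x :: "real \<Rightarrow> real^'n" and u :: "real \<Rightarrow> real"
  assumes hE: "\<forall>t\<ge>0. norm2 (mat_exp (t *\<^sub>R A)) \<le> M * exp (- \<sigma> * t)"
    and M: "0 < M" and sig: "0 < \<sigma>"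
    and hu: "\<And>t. 0 \<le> t \<Longrightarrow> \<bar>u t\<bar> \<le> 1"
    and hint: "\<And>t. 0 \<le> t \<Longrightarrow> ((\<lambda>s. A *v x s - u s *\<^sub>R B) has_integral (x t - x 0)) {0..t}"
    and t: "0 \<le> t"
  shows "norm (x t) \<le> M * norm (x 0) + M * norm B / \<sigma>"
proof -
  let ?E = "\<lambda>r. mat_exp (r *\<^sub>R A)"
  define f where "f = (\<lambda>s. A *v x s - u s *\<^sub>R B)"
  have fint: "f integrable_on {0..T}" for T
  proof (cases "0 \<le> T")
    case True then show ?thesis using hint[OF True] unfolding f_def by blast
  next
    case False then show ?thesis by (simp add: integrable_on_empty)
  qed
  have xeq: "x s = x 0 + integral {0..s} f" if "0 \<le> s" for s
    using integral_unique[OF hint[OF that]] unfolding f_def by simp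
  have xc: "continuous_on {0..T} x" for T
  proof -
    have "continuous_on {0..T} (\<lambda>s. x 0 + integral {0..s} f)"
      by (intro continuous_intros indefinite_integral_continuous_1 fint)
    then show ?thesis
    proof (rule continuous_on_eq)
      fix s assume "s \<in> {0..T}"
      then have "0 \<le> s" by simp
      then show "x 0 + integral {0..s} f = x s" by (metis xeq)
    qed
  qed
  have Axint: "(\<lambda>s. A *v x s) integrable_on {0..T}" for T
    by (intro integrable_continuous_real continuous_intros xc)
  have ub: "(\<lambda>s. u s *\<^sub>R B) integrable_on {0..T}" for T
    using integrable_diff[OF Axint fint, of T] unfolding f_def by simp
  define W where "W = (\<lambda>s. integral {0..s} (\<lambda>r. u r *\<^sub>R B))"
  have W0: "W 0 = 0" unfolding W_def by simp
  have Wc: "continuous_on {0..T} W" for T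
    unfolding W_def by (rule indefinite_integral_continuous_1[OF ub])
  have WL: "norm (W r - W s) \<le> norm B * (r - s)" if "0 \<le> s" "s \<le> r" for s r
  proof -
    have "W r - W s = integral {s..r} (\<lambda>r. u r *\<^sub>R B)"
      unfolding W_def using Henstock_Kurzweil_Integration.integral_combine[OF that ub[of r]]
      by (simp add: algebra_simps)
    moreover have "norm (integral {s..r} (\<lambda>r. u r *\<^sub>R B)) \<le> norm B * Henstock_Kurzweil_Integration.content {s..r}"
    proof (rule has_integral_bound_real[where S="{}"])
      show "((\<lambda>r. u r *\<^sub>R B) has_integral integral {s..r} (\<lambda>r. u r *\<^sub>R B)) {s..r}"
        by (rule integrable_integral, rule integrable_subinterval_real[OF ub[of r]]) (use that in auto)
      fix y assume "y \<in> {s..r} - {}"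
      then have "\<bar>u y\<bar> \<le> 1" using hu that by auto
      then show "norm (u y *\<^sub>R B) \<le> norm B"
        by (simp add: mult_left_le_one_le)
    qed auto
    ultimately show ?thesis using that by simp
  qed
  have stek: "norm (W t + integral {0..t} (\<lambda>s. ?E (t - s) *v (A *v W s))) \<le> M * norm B / \<sigma>"
    by (rule steklov_bound[OF hE M sig Wc W0 WL t])
  define y where "y = (\<lambda>s. x 0 + integral {0..s} (\<lambda>r. A *v x r))"
  have yW: "y s = x s + W s" if "0 \<le> s" for s
  proof -
    have "integral {0..s} f = integral {0..s} (\<lambda>r. A *v x r) - W s"
      unfolding f_def W_def by (rule integral_diff[OF Axint ub])
    then show ?thesis using xeq[OF that] unfolding y_def by simp
  qed
  have yd: "(y has_vector_derivative (A *v y s + - (A *v W s))) (at s within {0..t})" if s: "s \<in> {0..t}" for s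
  proof -
    have "(y has_vector_derivative (A *v x s)) (at s within {0..t})"
    proof -
      have "((\<lambda>u. integral {0..u} (\<lambda>r. A *v x r)) has_vector_derivative A *v x s) (at s within {0..t})"
        by (rule integral_has_vector_derivative[OF Av_cont[OF xc] s])
      then show ?thesis unfolding y_def
        by (intro derivative_eq_intros) auto
    qed
    moreover have "A *v x s = A *v y s + - (A *v W s)"
      using yW[of s] s by (simp add: matrix_vector_right_distrib)
    ultimately show ?thesis by simp
  qed
  have vc: "((\<lambda>s. ?E (t - s) *v (- (A *v W s))) has_integral (y t - ?E t *v y 0)) {0..t}"
    by (rule VC[OF t yd])
  have int3: "(\<lambda>s. ?E (t - s) *v (A *v W s)) integrable_on {0..t}"
    by (intro integrable_continuous_real E_cont continuous_intros Wc)
  have "((\<lambda>s. ?E (t - s) *v (- (A *v W s))) has_integral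
      - integral {0..t} (\<lambda>s. ?E (t - s) *v (A *v W s))) {0..t}"
    using has_integral_neg[OF integrable_integral[OF int3]]
    by (simp add: vec.neg)
  then have "y t - ?E t *v y 0 = - integral {0..t} (\<lambda>s. ?E (t - s) *v (A *v W s))"
    using vc by (rule has_integral_unique[symmetric])
  then have xt: "x t = ?E t *v x 0 - (W t + integral {0..t} (\<lambda>s. ?E (t - s) *v (A *v W s)))"
    using yW[OF t] unfolding y_def by (simp add: algebra_simps)
  have "norm (?E t *v x 0) \<le> M * exp (- \<sigma> * t) * norm (x 0)" by (rule E_norm[OF hE t])
  also have "\<dots> \<le> M * 1 * norm (x 0)"
    using M sig t by (intro mult_right_mono mult_left_mono) auto
  finally have "norm (?E t *v x 0) \<le> M * norm (x 0)" by simp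
  moreover have "norm (x t) \<le> norm (?E t *v x 0) + norm (W t + integral {0..t} (\<lambda>s. ?E (t - s) *v (A *v W s)))"
    unfolding xt by (rule norm_triangle_ineq4)
  ultimately show ?thesis using stek by linarith
qed

theorem mainTheorem9:
  fixes idx :: "'n::finite \<Rightarrow> nat" and a b :: "nat \<Rightarrow> real"
    and M \<sigma> :: real and x :: "real \<Rightarrow> real^'n"
  assumes "bij_betw idx UNIV {0..<CARD('n)}"
    and "hurwitz (obs_A idx a)"
    and "M > 0" and "\<sigma> > 0"
    and "\<forall>t\<ge>0. norm2 (mat_exp (t *\<^sub>R obs_A idx a)) \<le> M * exp (- \<sigma> * t)"
    and "relay_trajectory (obs_A idx a) (obs_B idx b) (obs_C idx) x"
    and "norm (x 0) \<le> 2 * M * norm (obs_B idx b) / \<sigma>"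
  shows "\<forall>t\<ge>0. norm (x t) \<le> M * (2 * M + 1) / \<sigma> * norm (obs_B idx b)"
proof (intro allI impI)
  fix t :: real assume t: "0 \<le> t"
  obtain u where hu1: "\<forall>t\<ge>0. u t \<in> sign_set (obs_C idx \<bullet> x t)"
    and hi: "\<forall>t\<ge>0. ((\<lambda>s. obs_A idx a *v x s - u s *\<^sub>R obs_B idx b) has_integral (x t - x 0)) {0..t}"
    using assms(6) unfolding relay_trajectory_def by blast
  have hu: "\<bar>u s\<bar> \<le> 1" if "0 \<le> s" for s
    using hu1 that by (auto simp: sign_set_def split: if_splits)
  have "norm (x t) \<le> M * norm (x 0) + M * norm (obs_B idx b) / \<sigma>"
    by (rule traj_bound[OF assms(5) assms(3) assms(4) hu]) (use hi t in auto)
  also have "\<dots> \<le> M * (2 * M * norm (obs_B idx b) / \<sigma>) + M * norm (obs_B idx b) / \<sigma>"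
    using assms(3,7) by (intro add_right_mono mult_left_mono) auto
  also have "\<dots> = M * (2 * M + 1) / \<sigma> * norm (obs_B idx b)"
    using assms(4) by (simp add: field_simps)
  finally show "norm (x t) \<le> M * (2 * M + 1) / \<sigma> * norm (obs_B idx b)" .
qed

end
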